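(* Let $\tau\in[0,1]$ and let $e$ be a Gaussian random vector in $\mathbb{R}^n$ with mean $m_e$ and positive semidefinite covariance $K_e$. Then: (i) $\mathcal{H}_\tau(e,\lambda)\ge0$, with equality if and only if $e=0$ (i.e. $m_e=0$ and $K_e=0$); (ii) $\lambda\mapsto\mathcal{H}_\tau(e,\lambda)$ is a monotone decreasing function.
   Context: The $\tau$ entropy is defined, for $\lambda>0$ with $\lambda>(1-\tau)\|K_e\|$ ($\|\cdot\|$ the spectral norm), by $\mathcal{H}_0(e,\lambda)=m_e^T(I_n-\frac1\lambda K_e)^{-1}m_e-\lambda\log\det(I_n-\frac1\lambda K_e)$; for $0<\tau<1$, $\mathcal{H}_\tau(e,\lambda)=m_e^T(I_n-\frac{1-\tau}\lambda K_e)^{-1}m_e+\frac\lambda\tau\mathrm{tr}\big((I_n-\frac{1-\tau}\lambda K_e)^{\frac\tau{\tau-1}}-I_n\big)$; $\mathcal{H}_1(e,\lambda)=m_e^Tm_e+\lambda\,\mathrm{tr}(\exp(\frac1\lambda K_e)-I_n)$; and $\mathcal{H}_\tau(e,\lambda)=\infty$ for other $\lambda$. *)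

theory Defs
  imports "HOL-Analysis.Analysis"
begin

definition diag_mat :: "('n::finite \<Rightarrow> real) \<Rightarrow> real^'n^'n" where
  "diag_mat mu = (\<chi> i j. if i = j then mu i else 0)"

definition mat_fun :: "(real \<Rightarrow> real) \<Rightarrow> real^'n::finite^'n \<Rightarrow> real^'n^'n" where
  "mat_fun f A = (SOME B. \<exists>P mu. orthogonal_matrix P \<and>
      A = P ** diag_mat mu ** transpose P \<and> B = P ** diag_mat (f \<circ> mu) ** transpose P)"

definition spec_norm :: "real^'n::finite^'n \<Rightarrow> real" where
  "spec_norm K = onorm (\<lambda>x. K *v x)"

definition H_tau :: "real \<Rightarrow> real^'n::finite \<Rightarrow> real^'n^'n \<Rightarrow> real \<Rightarrow> ereal" where
  "H_tau tau m K lam =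
    (if lam > 0 \<and> lam > (1 - tau) * spec_norm K then
       (if tau = 0 then
          ereal (m \<bullet> (matrix_inv (mat 1 - (1/lam) *\<^sub>R K) *v m)
                 - lam * ln (det (mat 1 - (1/lam) *\<^sub>R K)))
        else if 0 < tau \<and> tau < 1 then
          ereal (m \<bullet> (matrix_inv (mat 1 - ((1 - tau)/lam) *\<^sub>R K) *v m)
                 + (lam / tau) * trace (mat_fun (\<lambda>x. x powr (tau / (tau - 1)))
                                        (mat 1 - ((1 - tau)/lam) *\<^sub>R K) - mat 1))
        else if tau = 1 then
          ereal (m \<bullet> m + lam * trace (mat_fun exp ((1/lam) *\<^sub>R K) - mat 1))
        else \<infinity>)
     else \<infinity>)"

end

theory Submission
  imports Defs
begin

lemma sym_dot:
  fixes A :: "real^'n^'n"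
  assumes "transpose A = A"
  shows "x \<bullet> (A *v y) = (A *v x) \<bullet> y"
proof -
  have "x v* A = A *v x"
    by (metis assms transpose_matrix_vector)
  then show ?thesis by (metis dot_lmul_matrix)
qed

lemma mv_scale: "(A::real^'n^'n) *v (c *\<^sub>R x) = c *\<^sub>R (A *v x)"
  by (simp add: linear_scale)

lemma quad_zero:
  fixes a b :: real
  assumes "\<And>t. 2*t*a + t^2*b \<le> 0" and "a \<ge> 0"
  shows "a = 0"
proof (rule ccontr)
  assume "a \<noteq> 0"
  hence ap: "a > 0" using assms(2) by simp
  show False
  proof (cases "b \<ge> 0")
    case True
    then show ?thesis using assms(1)[of 1] ap by simp
  next
    case False
    define t where "t = a / (-b)"
    have tp: "t > 0" unfolding t_def using ap False by (intro divide_pos_pos) auto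
    have "t * b = -a" using False by (simp add: t_def)
    have "2*t*a + t^2*b = 2*t*a + t*(t*b)" by (simp add: power2_eq_square algebra_simps)
    also have "\<dots> = t*a" using \<open>t * b = -a\<close> by simp
    finally have "2*t*a + t^2*b = t*a" .
    moreover have "t*a > 0" using tp ap by simp
    ultimately show False using assms(1)[of t] by linarith
  qed
qed

lemma quad_helper:
  fixes qv t p qq c sv nn ww :: real
  assumes "qv + 2*t*p + t^2*qq \<le> c*(1 + 2*t* sv + t^2*nn)" "c = qv" "ww = p - c* sv"
  shows "2*t*ww + t^2*(qq - c*nn) \<le> 0"
proof -
  have "2*t*ww + t^2*(qq - c*nn) = (qv + 2*t*p + t^2*qq) - c*(1 + 2*t* sv + t^2*nn)"
    unfolding assms(2,3) by (simp add: algebra_simps)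
  thus ?thesis using assms(1) by linarith
qed

lemma spectral_aux:
  fixes A :: "real^'n^'n"
  assumes sym: "transpose A = A"
  shows "subspace S \<Longrightarrow> (\<forall>x\<in>S. A *v x \<in> S) \<Longrightarrow>
    \<exists>B. B \<subseteq> S \<and> span B = S \<and> pairwise orthogonal B \<and> (\<forall>v\<in>B. norm v = 1 \<and> (\<exists>c. A *v v = c *\<^sub>R v))"
proof (induct "dim S" arbitrary: S rule: less_induct)
  case less
  show ?case
  proof (cases "S = {0}")
    case True
    then show ?thesis by (intro exI[of _ "{}"]) auto
  next
    case False
    then obtain x where x: "x \<in> S" "x \<noteq> 0" using less.prems subspace_0 by blast
    let ?q = "\<lambda>x. x \<bullet> (A *v x)"
    have "x /\<^sub>R norm x \<in> S \<inter> sphere 0 1" using x less.prems(1)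
      by (simp add: subspace_scale)
    hence ne: "S \<inter> sphere 0 1 \<noteq> {}" by blast
    have cpt: "compact (S \<inter> sphere 0 1)"
      using closed_subspace[OF less.prems(1)] by (simp add: closed_Int_compact)
    have "continuous_on (S \<inter> sphere 0 1) ?q" by (intro continuous_intros)
    then obtain v where v0: "v \<in> S \<inter> sphere 0 1" and vmax: "\<forall>y\<in>S \<inter> sphere 0 1. ?q y \<le> ?q v"
      using continuous_attains_sup[OF cpt ne] by blast
    have v: "v \<in> S" "norm v = 1" using v0 by auto
    define c where "c = ?q v"
    have bound: "?q y \<le> c * (norm y)^2" if "y \<in> S" for y
    proof (cases "y = 0")
      case True then show ?thesis by simp
    next
      case False
      have "y /\<^sub>R norm y \<in> S \<inter> sphere 0 1" using that less.prems(1) False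
        by (simp add: subspace_scale)
      hence "?q (y /\<^sub>R norm y) \<le> c" using vmax c_def by blast
      moreover have "?q (y /\<^sub>R norm y) = ?q y / (norm y)^2"
        by (simp add: mv_scale power2_eq_square divide_inverse)
      ultimately show ?thesis using False by (simp add: divide_le_eq)
    qed
    define w where "w = A *v v - c *\<^sub>R v"
    have wS: "w \<in> S" unfolding w_def using less.prems v(1)
      by (simp add: subspace_diff subspace_scale)
    have "2*t*(w \<bullet> w) + t^2*(?q w - c * (norm w)^2) \<le> 0" for t
    proof -
      have "v + t *\<^sub>R w \<in> S" using less.prems(1) v(1) wS by (simp add: subspace_add subspace_scale)
      hence b: "?q (v + t *\<^sub>R w) \<le> c * (norm (v + t *\<^sub>R w))^2" by (rule bound)
      have e1: "?q (v + t *\<^sub>R w) = ?q v + 2*t*(w \<bullet> (A *v v)) + t^2 * ?q w"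
        using sym_dot[OF sym, of v w]
        by (simp add: algebra_simps mv_scale inner_commute power2_eq_square)
      have vv: "v \<bullet> v = 1" using v(2) by (simp add: norm_eq_1)
      have "(norm (v + t *\<^sub>R w))^2 = (v + t *\<^sub>R w) \<bullet> (v + t *\<^sub>R w)"
        by (simp add: power2_norm_eq_inner)
      also have "\<dots> = v \<bullet> v + 2*t*(v \<bullet> w) + t^2 * (w \<bullet> w)"
        by (simp add: inner_add inner_commute algebra_simps power2_eq_square)
      finally have e2: "(norm (v + t *\<^sub>R w))^2 = 1 + 2*t*(v \<bullet> w) + t^2 * (norm w)^2"
        using vv by (simp add: power2_norm_eq_inner)
      have e3: "w \<bullet> w = w \<bullet> (A *v v) - c * (v \<bullet> w)"
        by (simp add: w_def algebra_simps inner_commute)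
      show ?thesis using quad_helper[of "?q v" t "w \<bullet> (A *v v)" "?q w" c "v \<bullet> w" "(norm w)^2" "w \<bullet> w"]
          b e1 e2 e3 c_def by simp
    qed
    hence "w \<bullet> w = 0" by (intro quad_zero) auto
    hence eig: "A *v v = c *\<^sub>R v" by (simp add: w_def)
    define S' where "S' = {x\<in>S. v \<bullet> x = 0}"
    have sub': "subspace S'" using less.prems(1) unfolding S'_def subspace_def
      by (auto simp: inner_add_right)
    have inv': "\<forall>x\<in>S'. A *v x \<in> S'"
    proof
      fix x assume "x \<in> S'"
      then show "A *v x \<in> S'" using less.prems(2) sym_dot[OF sym, of v x] eig
        unfolding S'_def by auto
    qed
    have "span S' \<subset> span S"
    proof -
      have "v \<notin> S'" using v unfolding S'_def by (auto simp: norm_eq_1)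
      hence "S' \<subset> S" using v unfolding S'_def by blast
      then show ?thesis using sub' less.prems(1) by (metis span_eq_iff)
    qed
    hence "dim S' < dim S" by (rule dim_psubset)
    then obtain B' where B': "B' \<subseteq> S'" "span B' = S'" "pairwise orthogonal B'"
      "\<forall>v\<in>B'. norm v = 1 \<and> (\<exists>c. A *v v = c *\<^sub>R v)"
      using less.hyps[OF _ sub' inv'] by blast
    show ?thesis
    proof (intro exI[of _ "insert v B'"] conjI)
      show "insert v B' \<subseteq> S" using B'(1) v(1) unfolding S'_def by auto
      show "pairwise orthogonal (insert v B')"
        using B'(1,3) unfolding pairwise_insert S'_def
        by (auto simp: orthogonal_def inner_commute)
      show "\<forall>u\<in>insert v B'. norm u = 1 \<and> (\<exists>c. A *v u = c *\<^sub>R u)"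
        using B'(4) v(2) eig by auto
      show "span (insert v B') = S"
      proof
        show "span (insert v B') \<subseteq> S"
          using \<open>insert v B' \<subseteq> S\<close> less.prems(1) by (simp add: span_minimal)
        show "S \<subseteq> span (insert v B')"
        proof
          fix y assume y: "y \<in> S"
          have "y - (v \<bullet> y) *\<^sub>R v \<in> S'"
            using y v less.prems(1) unfolding S'_def
            by (auto simp: subspace_diff subspace_scale inner_diff_right norm_eq_1)
          hence "y - (v \<bullet> y) *\<^sub>R v \<in> span (insert v B')"
            using B'(2) span_mono[of B' "insert v B'"] by auto
          moreover have "(v \<bullet> y) *\<^sub>R v \<in> span (insert v B')"
            by (simp add: span_base span_scale)
          ultimately have "(y - (v \<bullet> y) *\<^sub>R v) + (v \<bullet> y) *\<^sub>R v \<in> span (insert v B')"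
            by (rule span_add)
          thus "y \<in> span (insert v B')" by simp
        qed
      qed
    qed
  qed
qed

lemma spectral:
  fixes A :: "real^'n^'n"
  assumes sym: "transpose A = A"
  shows "\<exists>P mu. orthogonal_matrix P \<and> A = P ** diag_mat mu ** transpose P"
proof -
  obtain B where B: "span B = UNIV" "pairwise orthogonal B"
    "\<forall>v\<in>B. norm v = 1 \<and> (\<exists>c. A *v v = c *\<^sub>R v)"
    using spectral_aux[OF sym, of UNIV] by auto
  have "0 \<notin> B" using B(3) by force
  hence ind: "independent B" using B(2) pairwise_orthogonal_independent by blast
  hence fin: "finite B" using finiteI_independent by blast
  have "card B = dim (UNIV :: (real^'n) set)"
    using dim_span_eq_card_independent[OF ind] B(1) by simp
  hence cB: "card (UNIV::'n set) = card B" by simp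
  obtain f where f: "bij_betw f (UNIV::'n set) B"
    using finite_same_card_bij[OF finite fin cB] by blast
  define mu where "mu j = (SOME c. A *v f j = c *\<^sub>R f j)" for j
  have fB: "f j \<in> B" for j using f bij_betwE by blast
  have eig: "A *v f j = mu j *\<^sub>R f j" for j
    unfolding mu_def using B(3) fB[of j] by (metis (mono_tags) someI_ex)
  define P :: "real^'n^'n" where "P = (\<chi> i j. f j $ i)"
  have col: "column j P = f j" for j by (simp add: P_def column_def vec_eq_iff)
  have oP: "orthogonal_matrix P"
    unfolding orthogonal_matrix_orthonormal_columns col
  proof (intro conjI allI impI)
    show "norm (f i) = 1" for i using B(3) fB by blast
    show "orthogonal (f i) (f j)" if "i \<noteq> j" for i j
      using B(2) fB[of i] fB[of j] f that unfolding pairwise_def bij_betw_def inj_on_def by blast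
  qed
  have AP: "A ** P = P ** diag_mat mu"
  proof -
    have "(A ** P) $ i $ j = (P ** diag_mat mu) $ i $ j" for i j
    proof -
      have "(A ** P) $ i $ j = (A *v f j) $ i"
        by (simp add: matrix_matrix_mult_def matrix_vector_mult_def P_def)
      also have "\<dots> = mu j * f j $ i" by (simp add: eig)
      also have "\<dots> = (P ** diag_mat mu) $ i $ j"
        by (simp add: matrix_matrix_mult_def diag_mat_def P_def if_distrib if_distribR sum.delta' cong: if_cong)
      finally show ?thesis .
    qed
    thus ?thesis by (simp add: vec_eq_iff)
  qed
  have "A = A ** (P ** transpose P)" using oP by (simp add: orthogonal_matrix_def)
  also have "\<dots> = P ** diag_mat mu ** transpose P" by (simp add: matrix_mul_assoc AP)
  finally show ?thesis using oP by blast
qed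


lemma sum_count:
  fixes a :: "'n::finite \<Rightarrow> real" and g :: "real \<Rightarrow> real"
  shows "(\<Sum>i\<in>UNIV. g (a i)) = (\<Sum>t\<in>range a. real (card {i. a i = t}) * g t)"
proof -
  have "(\<Sum>i\<in>UNIV. g (a i)) = (\<Sum>t\<in>range a. \<Sum>i\<in>{x\<in>UNIV. a x = t}. g (a i))"
    by (rule sum.image_gen) simp
  also have "\<dots> = (\<Sum>t\<in>range a. real (card {i. a i = t}) * g t)"
    by (intro sum.cong refl) simp
  finally show ?thesis .
qed

lemma sum_eq_count:
  fixes a b :: "'n::finite \<Rightarrow> real" and g :: "real \<Rightarrow> real"
  assumes "\<And>t. card {i. a i = t} = card {i. b i = t}"
  shows "(\<Sum>i\<in>UNIV. g (a i)) = (\<Sum>i\<in>UNIV. g (b i))"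
proof -
  have "range a = {t. card {i. a i = t} \<noteq> 0}" by auto
  moreover have "range b = {t. card {i. b i = t} \<noteq> 0}" by auto
  ultimately have "range a = range b" using assms by simp
  thus ?thesis using assms unfolding sum_count[of g a] sum_count[of g b] by simp
qed

lemma diag_mv: "diag_mat a *v y = (\<chi> i. a i * y $ i)"
  by (simp add: diag_mat_def matrix_vector_mult_def vec_eq_iff if_distrib if_distribR cong: if_cong)

lemma eigdim:
  fixes P :: "real^'n^'n"
  assumes oP: "orthogonal_matrix P"
  shows "dim {x. (P ** diag_mat a ** transpose P) *v x = t *\<^sub>R x} = card {i. a i = t}"
proof -
  let ?E = "{y::real^'n. \<forall>i. i \<notin> {i. a i = t} \<longrightarrow> y $ i = 0}"
  have PtP: "transpose P ** P = mat 1" and PPt: "P ** transpose P = mat 1"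
    using oP by (auto simp: orthogonal_matrix_def)
  have E: "diag_mat a *v y = t *\<^sub>R y \<longleftrightarrow> y \<in> ?E" for y
    by (auto simp: diag_mv vec_eq_iff)
  have eq: "{x. (P ** diag_mat a ** transpose P) *v x = t *\<^sub>R x} = (\<lambda>y. P *v y) ` ?E"
  proof (intro set_eqI iffI)
    fix x assume "x \<in> {x. (P ** diag_mat a ** transpose P) *v x = t *\<^sub>R x}"
    hence "transpose P *v ((P ** diag_mat a ** transpose P) *v x) = transpose P *v (t *\<^sub>R x)" by simp
    hence "diag_mat a *v (transpose P *v x) = t *\<^sub>R (transpose P *v x)"
      by (simp add: matrix_vector_mul_assoc matrix_mul_assoc PtP linear_scale del: transpose_matrix_vector)
    hence "transpose P *v x \<in> ?E" using E by blast
    moreover have "x = P *v (transpose P *v x)" by (simp add: matrix_vector_mul_assoc PPt del: transpose_matrix_vector)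
    ultimately show "x \<in> (\<lambda>y. P *v y) ` ?E" by blast
  next
    fix x assume "x \<in> (\<lambda>y. P *v y) ` ?E"
    then obtain y where y: "y \<in> ?E" "x = P *v y" by blast
    have "(P ** diag_mat a ** transpose P) *v x = P *v (diag_mat a *v y)"
      by (simp add: y(2) matrix_vector_mul_assoc matrix_mul_assoc[symmetric] PtP del: transpose_matrix_vector)
    also have "\<dots> = t *\<^sub>R x" using E[of y] y by (simp add: linear_scale)
    finally show "x \<in> {x. (P ** diag_mat a ** transpose P) *v x = t *\<^sub>R x}" by simp
  qed
  have inj: "inj ((*v) P)"
    by (metis PtP inj_on_inverseI matrix_vector_mul_assoc matrix_vector_mul_lid)
  have "dim ((\<lambda>y. P *v y) ` ?E) = dim ?E"
    using inj by (intro dim_image_eq) (auto intro: inj_on_subset)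
  also have "\<dots> = card {i. a i = t}"
    using dim_substandard_cart[of "{i. a i = t}", where 'a=real] unfolding dim_vec_eq by simp
  finally show ?thesis using eq by simp
qed

lemma conj_entry:
  "(P ** diag_mat d ** transpose P) $ i $ j = (\<Sum>k\<in>UNIV. P$i$k * d k * P$j$k)"
  by (simp add: matrix_matrix_mult_def diag_mat_def transpose_def if_distrib if_distribR sum.delta' cong: if_cong)

lemma conj_affine:
  fixes P :: "real^'n^'n"
  assumes oP: "orthogonal_matrix P"
  shows "x *\<^sub>R mat 1 + c *\<^sub>R (P ** diag_mat d ** transpose P) = P ** diag_mat (\<lambda>i. x + c * d i) ** transpose P"
proof -
  have PPt: "P ** transpose P = mat 1" using oP by (simp add: orthogonal_matrix_def)
  have one: "(\<Sum>k\<in>UNIV. P$i$k * P$j$k) = mat 1 $ i $ j" for i j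
    using arg_cong[OF PPt, of "\<lambda>M. M$i$j"]
    by (simp add: matrix_matrix_mult_def transpose_def)
  show ?thesis
    by (simp add: vec_eq_iff conj_entry algebra_simps sum.distrib sum_distrib_left flip: one)
qed

lemma dd: "(\<Sum>k\<in>(UNIV::'n::finite set). (if i = k then x else 0) * (if k = j then y k else 0)) = (if i = j then x * y i else (0::real))"
proof -
  have "(\<Sum>k\<in>(UNIV::'n set). (if i = k then x else 0) * (if k = j then y k else 0)) = (\<Sum>k\<in>UNIV. if k = i then x * (if k = j then y k else 0) else 0)"
    by (intro sum.cong) auto
  also have "\<dots> = (if i = j then x * y i else 0)" by (subst sum.delta) auto
  finally show ?thesis .
qed
lemma conj_mult:
  fixes P :: "real^'n^'n"
  assumes oP: "orthogonal_matrix P"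
  shows "(P ** diag_mat a ** transpose P) ** (P ** diag_mat b ** transpose P) = P ** diag_mat (\<lambda>i. a i * b i) ** transpose P"
proof -
  have PtP: "transpose P ** P = mat 1" using oP by (simp add: orthogonal_matrix_def)
  have d: "diag_mat a ** diag_mat b = diag_mat (\<lambda>i. a i * b i)"
    by (simp add: vec_eq_iff matrix_matrix_mult_def diag_mat_def dd)
  have "(P ** diag_mat a ** transpose P) ** (P ** diag_mat b ** transpose P)
     = P ** diag_mat a ** (transpose P ** P) ** diag_mat b ** transpose P"
    by (simp add: matrix_mul_assoc)
  also have "\<dots> = P ** (diag_mat a ** diag_mat b) ** transpose P"
    by (simp add: PtP matrix_mul_assoc)
  finally show ?thesis by (simp add: d)
qed

lemma conj_inv:
  fixes P :: "real^'n^'n"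
  assumes oP: "orthogonal_matrix P" and nz: "\<And>i. d i \<noteq> 0"
  shows "matrix_inv (P ** diag_mat d ** transpose P) = P ** diag_mat (\<lambda>i. 1 / d i) ** transpose P"
proof -
  let ?A = "P ** diag_mat d ** transpose P" and ?B = "P ** diag_mat (\<lambda>i. 1 / d i) ** transpose P"
  have I: "P ** diag_mat (\<lambda>i. 1) ** transpose P = mat 1"
    using conj_affine[OF oP, of 1 0 d] by simp
  have AB: "?A ** ?B = mat 1" "?B ** ?A = mat 1"
    using conj_mult[OF oP, of d "\<lambda>i. 1 / d i"] conj_mult[OF oP, of "\<lambda>i. 1 / d i" d] nz I
    by simp_all
  show ?thesis unfolding matrix_inv_def
  proof (rule some_equality)
    show "?A ** ?B = mat 1 \<and> ?B ** ?A = mat 1" using AB by simp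
    fix C assume C: "?A ** C = mat 1 \<and> C ** ?A = mat 1"
    have "C = C ** (?A ** ?B)" using AB by simp
    also have "\<dots> = (C ** ?A) ** ?B" by (simp only: matrix_mul_assoc)
    also have "\<dots> = ?B" using C by simp
    finally show "C = ?B" .
  qed
qed

lemma conj_quad:
  fixes P :: "real^'n^'n"
  shows "m \<bullet> ((P ** diag_mat d ** transpose P) *v m) = (\<Sum>i\<in>UNIV. d i * ((transpose P *v m) $ i)^2)"
proof -
  let ?y = "transpose P *v m"
  have "(P ** diag_mat d ** transpose P) *v m = P *v (diag_mat d *v ?y)"
    by (simp add: matrix_vector_mul_assoc matrix_mul_assoc del: transpose_matrix_vector)
  hence "m \<bullet> ((P ** diag_mat d ** transpose P) *v m) = (m v* P) \<bullet> (diag_mat d *v ?y)"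
    by (simp add: dot_lmul_matrix del: transpose_matrix_vector)
  also have "\<dots> = ?y \<bullet> (diag_mat d *v ?y)" by simp
  also have "\<dots> = (\<Sum>i\<in>UNIV. d i * (?y $ i)^2)"
    by (simp add: inner_vec_def diag_mv power2_eq_square algebra_simps del: transpose_matrix_vector)
  finally show ?thesis .
qed

lemma conj_det:
  fixes P :: "real^'n^'n"
  assumes oP: "orthogonal_matrix P"
  shows "det (P ** diag_mat d ** transpose P) = (\<Prod>i\<in>UNIV. d i)"
proof -
  have "det P * det P = 1" using det_orthogonal_matrix[OF oP] by auto
  moreover have "det (diag_mat d) = (\<Prod>i\<in>UNIV. d i)"
    by (subst det_diagonal) (auto simp: diag_mat_def)
  ultimately show ?thesis by (simp add: det_mul det_transpose)
qed

lemma conj_trace: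
  fixes P :: "real^'n^'n"
  assumes oP: "orthogonal_matrix P"
  shows "trace (P ** diag_mat d ** transpose P) = (\<Sum>i\<in>UNIV. d i)"
proof -
  have PtP: "transpose P ** P = mat 1" using oP by (simp add: orthogonal_matrix_def)
  have "trace (P ** diag_mat d ** transpose P) = trace (transpose P ** (P ** diag_mat d))"
    by (rule trace_mul_sym)
  also have "\<dots> = trace (diag_mat d)" by (simp add: matrix_mul_assoc PtP)
  also have "\<dots> = (\<Sum>i\<in>UNIV. d i)" by (simp add: trace_def diag_mat_def)
  finally show ?thesis .
qed

lemma spec_unique:
  fixes P Q :: "real^'n^'n" and g :: "real \<Rightarrow> real"
  assumes "orthogonal_matrix P" "orthogonal_matrix Q"
    and "P ** diag_mat a ** transpose P = Q ** diag_mat b ** transpose Q"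
  shows "(\<Sum>i\<in>UNIV. g (a i)) = (\<Sum>i\<in>UNIV. g (b i))"
proof (rule sum_eq_count[of a b g])
  fix t show "card {i. a i = t} = card {i. b i = t}"
    using eigdim[OF assms(1), of a t] eigdim[OF assms(2), of b t] assms(3) by simp
qed

lemma mat_fun_trace:
  fixes P :: "real^'n^'n"
  assumes oP: "orthogonal_matrix P" and A: "A = P ** diag_mat d ** transpose P"
  shows "trace (mat_fun f A) = (\<Sum>i\<in>UNIV. f (d i))"
proof -
  let ?Q = "\<lambda>B. \<exists>P mu. orthogonal_matrix P \<and> A = P ** diag_mat mu ** transpose P \<and> B = P ** diag_mat (f \<circ> mu) ** transpose P"
  have "?Q (P ** diag_mat (f \<circ> d) ** transpose P)" using oP A by blast
  hence "?Q (mat_fun f A)" unfolding mat_fun_def by (rule someI)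
  then obtain Q mu where Q: "orthogonal_matrix Q" "A = Q ** diag_mat mu ** transpose Q"
    "mat_fun f A = Q ** diag_mat (f \<circ> mu) ** transpose Q" by blast
  have "trace (mat_fun f A) = (\<Sum>i\<in>UNIV. f (mu i))" using Q by (simp add: conj_trace)
  also have "\<dots> = (\<Sum>i\<in>UNIV. f (d i))"
    using spec_unique[OF Q(1) oP, of mu d f] Q(2) A by simp
  finally show ?thesis .
qed


lemma h0_deriv:
  fixes k x :: real
  assumes "0 \<le> k" "k < x"
  shows "((\<lambda>x. - x * ln (1 - k/x)) has_real_derivative (- ln(1-k/x) - k/(x - k))) (at x)"
proof -
  have x0: "x > 0" using assms by linarith
  have b: "1 - k/x > 0" using assms x0 by (simp add: field_simps)
  show ?thesis
    using x0 b assms by (auto intro!: derivative_eq_intros simp: field_simps power2_eq_square)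
qed

lemma h0_mono:
  fixes k l1 l2 :: real
  assumes "0 \<le> k" "k < l1" "l1 \<le> l2"
  shows "- l2 * ln (1 - k/l2) \<le> - l1 * ln (1 - k/l1)"
proof (rule DERIV_nonpos_imp_nonincreasing[OF assms(3)])
  fix x assume x: "l1 \<le> x" "x \<le> l2"
  hence kx: "k < x" using assms by linarith
  have x0: "x > 0" using assms x by linarith
  define u where "u = 1 - k/x"
  have u: "u > 0" using kx x0 by (simp add: u_def field_simps)
  have "k/(x-k) = 1/u - 1" using x0 kx by (simp add: u_def field_simps)
  moreover have "- ln u \<le> 1/u - 1" using ln_le_minus_one[of "1/u"] u by (simp add: ln_div)
  ultimately have "- ln(1-k/x) - k/(x - k) \<le> 0" unfolding u_def by simp
  thus "\<exists>y. ((\<lambda>x. - x * ln (1 - k/x)) has_real_derivative y) (at x) \<and> y \<le> 0"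
    using h0_deriv[OF assms(1) kx] by blast
qed

lemma h1_deriv:
  fixes k x :: real
  assumes "0 < x"
  shows "((\<lambda>x. x * (exp (k/x) - 1)) has_real_derivative (exp (k/x) - 1 - (k/x) * exp (k/x))) (at x)"
  using assms by (auto intro!: derivative_eq_intros simp: field_simps power2_eq_square)

lemma h1_mono:
  fixes k l1 l2 :: real
  assumes "0 < l1" "l1 \<le> l2"
  shows "l2 * (exp (k/l2) - 1) \<le> l1 * (exp (k/l1) - 1)"
proof (rule DERIV_nonpos_imp_nonincreasing[OF assms(2)])
  fix x assume x: "l1 \<le> x" "x \<le> l2"
  have x0: "x > 0" using assms x by linarith
  define s where "s = k/x"
  have "1 + (-s) \<le> exp (-s)" by (rule exp_ge_add_one_self)
  hence "(1 - s) * exp s \<le> exp (-s) * exp s" by (intro mult_right_mono) auto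
  hence "(1 - s) * exp s \<le> 1" by (simp add: exp_minus)
  hence "exp s - 1 - s * exp s \<le> 0" by (simp add: algebra_simps)
  thus "\<exists>y. ((\<lambda>x. x * (exp (k/x) - 1)) has_real_derivative y) (at x) \<and> y \<le> 0"
    using h1_deriv[OF x0, of k] s_def by blast
qed

lemma hm_ineq:
  fixes b p :: real
  assumes "0 < b" "b \<le> 1" "p < 0"
  shows "b powr p - 1 + p * b powr (p - 1) * (1 - b) \<le> 0"
proof -
  have "exp (-p * ln b) \<ge> 1 + (-p * ln b)" by (rule exp_ge_add_one_self)
  moreover have "ln (1/b) \<le> 1/b - 1" using assms by (intro ln_le_minus_one) simp
  hence "- ln b \<le> 1/b - 1" using assms by (simp add: ln_div)
  hence "ln b \<ge> 1 - 1/b" by simp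
  hence "(-p) * ln b \<ge> (-p) * (1 - 1/b)" using assms by (intro mult_left_mono) auto
  ultimately have e: "b powr (-p) \<ge> 1 + p * (1/b - 1)" using assms
    by (simp add: powr_def algebra_simps)
  have bp: "b powr p > 0" using assms by simp
  have "b powr p * b powr (-p) = 1" using assms by (simp add: powr_add[symmetric])
  have pm1: "b powr (p - 1) = b powr p / b" using assms by (simp add: powr_diff)
  have "b powr p * (1 + p * (1/b - 1)) \<le> b powr p * b powr (-p)"
    using e bp by (intro mult_left_mono) auto
  also have "\<dots> = 1" using assms by (simp add: powr_add[symmetric])
  finally have "b powr p * (1 + p * (1/b - 1)) \<le> 1" .
  moreover have "b powr p * (1 + p * (1/b - 1)) = b powr p + p * b powr (p - 1) * (1 - b)"
    using assms pm1 by (simp add: field_simps)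
  ultimately show ?thesis by simp
qed

lemma hm_deriv:
  fixes a x tau p :: real
  assumes "0 \<le> a" "a < x" "tau > 0"
  shows "((\<lambda>x. x / tau * ((1 - a/x) powr p - 1)) has_real_derivative
     (1/tau) * ((1 - a/x) powr p - 1 + p * (1 - a/x) powr (p - 1) * (1 - (1 - a/x)))) (at x)"
proof -
  have x0: "x > 0" using assms by linarith
  have b: "1 - a/x > 0" using assms x0 by (simp add: field_simps)
  show ?thesis
    using x0 b assms by (auto intro!: derivative_eq_intros simp: field_simps power2_eq_square)
qed

lemma hm_mono:
  fixes a l1 l2 tau p :: real
  assumes "0 \<le> a" "a < l1" "l1 \<le> l2" "tau > 0" "p < 0"
  shows "l2 / tau * ((1 - a/l2) powr p - 1) \<le> l1 / tau * ((1 - a/l1) powr p - 1)"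
proof (rule DERIV_nonpos_imp_nonincreasing[OF assms(3)])
  fix x assume x: "l1 \<le> x" "x \<le> l2"
  hence ax: "a < x" using assms by linarith
  have x0: "x > 0" using assms x by linarith
  have b: "1 - a/x > 0" "1 - a/x \<le> 1" using ax x0 assms(1) by (auto simp: field_simps)
  have "(1/tau) * ((1 - a/x) powr p - 1 + p * (1 - a/x) powr (p - 1) * (1 - (1 - a/x))) \<le> 0"
    using hm_ineq[OF b assms(5)] assms(4) by (simp add: divide_nonpos_pos)
  thus "\<exists>y. ((\<lambda>x. x / tau * ((1 - a/x) powr p - 1)) has_real_derivative y) (at x) \<and> y \<le> 0"
    using hm_deriv[OF assms(1) ax assms(4), of p] by blast
qed

definition hfun :: "real \<Rightarrow> real \<Rightarrow> real \<Rightarrow> real" where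
  "hfun tau lam k = (if tau = 0 then - lam * ln (1 - k/lam)
     else if tau < 1 then lam / tau * ((1 - (1-tau)*k/lam) powr (tau/(tau-1)) - 1)
     else lam * (exp (k/lam) - 1))"

definition qterm :: "real \<Rightarrow> real \<Rightarrow> real \<Rightarrow> real \<Rightarrow> real" where
  "qterm tau lam k y = y^2 / (1 - (1-tau)*k/lam)"

lemma hfun_props:
  fixes tau lam k :: real
  assumes "0 \<le> tau" "tau \<le> 1" "0 \<le> k" "0 < lam" "(1-tau)*k < lam"
  shows "0 \<le> hfun tau lam k" "hfun tau lam k = 0 \<longleftrightarrow> k = 0"
proof -
  have "0 \<le> hfun tau lam k \<and> (hfun tau lam k = 0 \<longleftrightarrow> k = 0)"
  proof (cases "tau = 0")
    case True
    have b: "0 < 1 - k/lam" "1 - k/lam \<le> 1" using assms True by (auto simp: field_simps)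
    have "ln (1 - k/lam) \<le> 0" using b by simp
    moreover have "ln (1 - k/lam) = 0 \<longleftrightarrow> k = 0" using b assms(4) by (simp add: field_simps)
    ultimately show ?thesis using True assms(4) by (auto simp: hfun_def mult_le_0_iff)
  next
    case False
    note t0 = False
    show ?thesis
    proof (cases "tau < 1")
      case True
      define b where "b = 1 - (1-tau)*k/lam"
      define p where "p = tau/(tau-1)"
      have p: "p < 0" using t0 True assms(1) by (simp add: p_def divide_pos_neg)
      have "0 \<le> (1-tau)*k" using assms True by simp
      hence b: "0 < b" "b \<le> 1" using assms True by (auto simp: b_def field_simps)
      have lb: "ln b \<le> 0" using b by simp
      have "p * ln b \<ge> 0" using p lb by (simp add: mult_nonpos_nonpos)
      hence bp: "b powr p \<ge> 1" using b by (simp add: powr_def)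
      have "b powr p = 1 \<longleftrightarrow> k = 0"
      proof
        assume "b powr p = 1"
        hence "p * ln b = 0" using b by (simp add: powr_def)
        hence "ln b = 0" using p by simp
        hence "b = 1" using b by simp
        thus "k = 0" using True assms(4) by (simp add: b_def field_simps)
      qed (simp add: b_def)
      moreover have "hfun tau lam k = lam / tau * (b powr p - 1)"
        using t0 True by (simp add: hfun_def b_def p_def)
      moreover have "lam / tau > 0" using assms t0 by simp
      moreover have "lam / tau * (b powr p - 1) \<ge> 0" using bp \<open>lam / tau > 0\<close> by (intro mult_nonneg_nonneg) auto
      ultimately show ?thesis by auto
    next
      case False
      hence "tau = 1" using assms by simp
      hence h: "hfun tau lam k = lam * (exp (k/lam) - 1)" by (simp add: hfun_def)
      have "exp (k/lam) \<ge> 1" using assms by simp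
      moreover have "exp (k/lam) = 1 \<longleftrightarrow> k = 0" using assms(4) by simp
      ultimately show ?thesis using h assms(4) by auto
    qed
  qed
  thus "0 \<le> hfun tau lam k" "hfun tau lam k = 0 \<longleftrightarrow> k = 0" by auto
qed

lemma hfun_mono:
  fixes tau l1 l2 k :: real
  assumes "0 \<le> tau" "tau \<le> 1" "0 \<le> k" "0 < l1" "(1-tau)*k < l1" "l1 \<le> l2"
  shows "hfun tau l2 k \<le> hfun tau l1 k"
proof (cases "tau = 0")
  case True
  then show ?thesis using h0_mono[of k l1 l2] assms by (simp add: hfun_def)
next
  case False
  note t0 = False
  show ?thesis
  proof (cases "tau < 1")
    case True
    have p: "tau/(tau-1) < 0" using t0 True assms(1) by (simp add: divide_pos_neg)
    have "0 \<le> (1-tau)*k" using assms True by simp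
    from hm_mono[OF this assms(5,6) _ p] t0 True assms(1)
    show ?thesis by (simp add: hfun_def)
  next
    case False
    then show ?thesis using h1_mono[OF assms(4,6), of k] t0 by (simp add: hfun_def)
  qed
qed

lemma qterm_props:
  fixes tau lam k y :: real
  assumes "0 \<le> tau" "tau \<le> 1" "0 \<le> k" "0 < lam" "(1-tau)*k < lam"
  shows "0 \<le> qterm tau lam k y" "qterm tau lam k y = 0 \<longleftrightarrow> y = 0"
proof -
  have "0 < 1 - (1-tau)*k/lam" using assms by (simp add: field_simps)
  thus "0 \<le> qterm tau lam k y" "qterm tau lam k y = 0 \<longleftrightarrow> y = 0" by (auto simp: qterm_def)
qed

lemma qterm_mono:
  fixes tau l1 l2 k y :: real
  assumes "0 \<le> tau" "tau \<le> 1" "0 \<le> k" "0 < l1" "(1-tau)*k < l1" "l1 \<le> l2"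
  shows "qterm tau l2 k y \<le> qterm tau l1 k y"
proof -
  have d1: "0 < 1 - (1-tau)*k/l1" using assms by (simp add: field_simps)
  have "(1-tau)*k/l2 \<le> (1-tau)*k/l1" using assms by (intro divide_left_mono) auto
  hence "1 - (1-tau)*k/l1 \<le> 1 - (1-tau)*k/l2" by simp
  thus ?thesis unfolding qterm_def using d1 by (intro divide_left_mono) auto
qed


lemma eigvec:
  fixes P :: "real^'n^'n"
  assumes oP: "orthogonal_matrix P"
  shows "(P ** diag_mat d ** transpose P) *v column i P = d i *\<^sub>R column i P"
    "norm (column i P) = 1"
proof -
  have PtP: "transpose P ** P = mat 1" using oP by (simp add: orthogonal_matrix_def)
  have "(P ** diag_mat d ** transpose P) *v (P *v axis i 1) = P *v (diag_mat d *v axis i 1)"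
    by (simp add: matrix_vector_mul_assoc matrix_mul_assoc[symmetric] PtP del: transpose_matrix_vector)
  also have "diag_mat d *v axis i 1 = d i *\<^sub>R axis i (1::real)"
    by (simp add: diag_mv vec_eq_iff axis_def)
  finally show "(P ** diag_mat d ** transpose P) *v column i P = d i *\<^sub>R column i P"
    by (simp add: matrix_vector_mult_basis linear_scale)
  show "norm (column i P) = 1" using oP orthogonal_matrix_orthonormal_columns by blast
qed

lemma kappa_props:
  fixes P K :: "real^'n^'n"
  assumes oP: "orthogonal_matrix P" and KP: "K = P ** diag_mat kappa ** transpose P"
    and psd: "\<forall>x. 0 \<le> x \<bullet> (K *v x)"
  shows "0 \<le> kappa i" "kappa i \<le> spec_norm K"
proof -
  let ?c = "column i P"
  have e: "K *v ?c = kappa i *\<^sub>R ?c" and n: "norm ?c = 1" using eigvec[OF oP] KP by auto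
  have "?c \<bullet> (K *v ?c) = kappa i" using e n by (simp add: norm_eq_1)
  thus k0: "0 \<le> kappa i" using psd by metis
  have "norm (K *v ?c) \<le> onorm (\<lambda>x. K *v x) * norm ?c" by (rule onorm) simp
  thus "kappa i \<le> spec_norm K" using e n k0 by (simp add: spec_norm_def)
qed

lemma mat1_conj:
  fixes P :: "real^'n^'n"
  assumes oP: "orthogonal_matrix P"
  shows "mat 1 - c *\<^sub>R (P ** diag_mat d ** transpose P) = P ** diag_mat (\<lambda>i. 1 - c * d i) ** transpose P"
    "c *\<^sub>R (P ** diag_mat d ** transpose P) = P ** diag_mat (\<lambda>i. c * d i) ** transpose P"
proof -
  show "mat 1 - c *\<^sub>R (P ** diag_mat d ** transpose P) = P ** diag_mat (\<lambda>i. 1 - c * d i) ** transpose P"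
    using conj_affine[OF oP, of 1 "-c" d] by (simp add: algebra_simps)
  show "c *\<^sub>R (P ** diag_mat d ** transpose P) = P ** diag_mat (\<lambda>i. c * d i) ** transpose P"
    using conj_affine[OF oP, of 0 c d] by simp
qed


lemma main_formula:
  fixes P K :: "real^'n^'n" and m :: "real^'n"
  assumes oP: "orthogonal_matrix P" and KP: "K = P ** diag_mat kappa ** transpose P"
    and kpos: "\<And>i. 0 \<le> kappa i" and kb: "\<And>i. kappa i \<le> spec_norm K"
    and t: "0 \<le> tau" "tau \<le> 1" and lam: "0 < lam" "(1 - tau) * spec_norm K < lam"
  shows "H_tau tau m K lam = ereal (\<Sum>i\<in>UNIV. qterm tau lam (kappa i) ((transpose P *v m) $ i)
                                         + hfun tau lam (kappa i))"
proof -
  let ?y = "transpose P *v m"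
  have feas: "(1 - tau) * kappa i < lam" for i
    using mult_left_mono[OF kb[of i], of "1 - tau"] t lam by linarith
  have I: "mat 1 = P ** diag_mat (\<lambda>i. 1) ** transpose P"
    using mat1_conj(1)[OF oP, of 0 kappa] by simp
  have H: "H_tau tau m K lam =
    (if tau = 0 then
          ereal (m \<bullet> (matrix_inv (mat 1 - (1/lam) *\<^sub>R K) *v m)
                 - lam * ln (det (mat 1 - (1/lam) *\<^sub>R K)))
        else if 0 < tau \<and> tau < 1 then
          ereal (m \<bullet> (matrix_inv (mat 1 - ((1 - tau)/lam) *\<^sub>R K) *v m)
                 + (lam / tau) * trace (mat_fun (\<lambda>x. x powr (tau / (tau - 1)))
                                        (mat 1 - ((1 - tau)/lam) *\<^sub>R K) - mat 1))
        else if tau = 1 then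
          ereal (m \<bullet> m + lam * trace (mat_fun exp ((1/lam) *\<^sub>R K) - mat 1))
        else \<infinity>)"
    unfolding H_tau_def using lam by (simp add: mult.commute)
  have quad: "m \<bullet> (matrix_inv (mat 1 - c *\<^sub>R K) *v m) = (\<Sum>i\<in>UNIV. ?y $ i ^ 2 / (1 - c * kappa i))"
    if "\<And>i. 1 - c * kappa i \<noteq> 0" for c
  proof -
    have "matrix_inv (mat 1 - c *\<^sub>R K) = P ** diag_mat (\<lambda>i. 1 / (1 - c * kappa i)) ** transpose P"
      unfolding KP mat1_conj(1)[OF oP] by (rule conj_inv[OF oP that])
    thus ?thesis by (simp add: conj_quad)
  qed
  have ntr: "trace (M - mat 1) = trace M - (\<Sum>i\<in>(UNIV::'n set). 1)" for M :: "real^'n^'n"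
    by (simp add: trace_sub trace_I)
  show ?thesis
  proof (cases "tau = 0")
    case True
    have d: "1 - (1/lam) * kappa i > 0" for i using feas[of i] True lam by (simp add: field_simps)
    hence dn: "1 - (1/lam) * kappa i \<noteq> 0" for i by (metis less_irrefl)
    have det: "det (mat 1 - (1/lam) *\<^sub>R K) = (\<Prod>i\<in>UNIV. 1 - (1/lam) * kappa i)"
      unfolding KP mat1_conj(1)[OF oP] by (rule conj_det[OF oP])
    have "ln (\<Prod>i\<in>UNIV. 1 - (1/lam) * kappa i) = (\<Sum>i\<in>UNIV. ln (1 - (1/lam) * kappa i))"
      using dn by (simp add: ln_prod)
    hence "m \<bullet> (matrix_inv (mat 1 - (1/lam) *\<^sub>R K) *v m) - lam * ln (det (mat 1 - (1/lam) *\<^sub>R K))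
       = (\<Sum>i\<in>UNIV. ?y $ i ^ 2 / (1 - (1/lam) * kappa i)) - lam * (\<Sum>i\<in>UNIV. ln (1 - (1/lam) * kappa i))"
      using quad[OF dn] det by simp
    also have "\<dots> = (\<Sum>i\<in>UNIV. qterm tau lam (kappa i) (?y $ i) + hfun tau lam (kappa i))"
      using True by (simp add: qterm_def hfun_def sum.distrib sum_distrib_left sum_subtractf)
    finally show ?thesis using H True by simp
  next
    case False
    note t0 = False
    show ?thesis
    proof (cases "tau < 1")
      case True
      let ?c = "(1 - tau)/lam"
      have d: "1 - ?c * kappa i > 0" for i using feas[of i] lam by (simp add: field_simps)
      hence dn: "1 - ?c * kappa i \<noteq> 0" for i by (metis less_irrefl)
      have tr: "trace (mat_fun (\<lambda>x. x powr (tau / (tau - 1))) (mat 1 - ?c *\<^sub>R K))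
          = (\<Sum>i\<in>UNIV. (1 - ?c * kappa i) powr (tau / (tau - 1)))"
        by (rule mat_fun_trace[OF oP]) (simp add: KP mat1_conj(1)[OF oP])
      have "m \<bullet> (matrix_inv (mat 1 - ?c *\<^sub>R K) *v m)
                 + (lam / tau) * trace (mat_fun (\<lambda>x. x powr (tau / (tau - 1)))
                                        (mat 1 - ?c *\<^sub>R K) - mat 1)
         = (\<Sum>i\<in>UNIV. ?y $ i ^ 2 / (1 - ?c * kappa i))
            + (lam / tau) * ((\<Sum>i\<in>UNIV. (1 - ?c * kappa i) powr (tau / (tau - 1))) - (\<Sum>i\<in>(UNIV::'n set). 1))"
        using quad[OF dn] tr ntr by simp
      also have "\<dots> = (\<Sum>i\<in>UNIV. qterm tau lam (kappa i) (?y $ i) + hfun tau lam (kappa i))"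
        using True t0 by (simp add: qterm_def hfun_def sum.distrib sum_distrib_left sum_subtractf
            right_diff_distrib mult.commute)
      finally show ?thesis using H True t0 t by simp
    next
      case False
      hence t1: "tau = 1" using t by simp
      have tr: "trace (mat_fun exp ((1/lam) *\<^sub>R K)) = (\<Sum>i\<in>UNIV. exp ((1/lam) * kappa i))"
        by (rule mat_fun_trace[OF oP]) (simp add: KP mat1_conj(2)[OF oP])
      have mm: "m \<bullet> m = (\<Sum>i\<in>UNIV. ?y $ i ^ 2)"
        using conj_quad[of m P "\<lambda>i. 1"] by (simp add: I[symmetric])
      have "m \<bullet> m + lam * trace (mat_fun exp ((1/lam) *\<^sub>R K) - mat 1)
         = (\<Sum>i\<in>UNIV. ?y $ i ^ 2) + lam * ((\<Sum>i\<in>UNIV. exp ((1/lam) * kappa i)) - (\<Sum>i\<in>(UNIV::'n set). 1))"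
        using mm tr ntr by simp
      also have "\<dots> = (\<Sum>i\<in>UNIV. qterm tau lam (kappa i) (?y $ i) + hfun tau lam (kappa i))"
        using t1 by (simp add: qterm_def hfun_def sum.distrib sum_distrib_left sum_subtractf
            right_diff_distrib mult.commute)
      finally show ?thesis using H t1 by simp
    qed
  qed
qed


theorem proposition3:
  fixes tau :: real and m :: "real^'n" and K :: "real^'n^'n"
  assumes "0 \<le> tau" and "tau \<le> 1"
    and "transpose K = K"
    and "\<forall>x. 0 \<le> x \<bullet> (K *v x)"
  shows "(\<forall>lam. 0 \<le> H_tau tau m K lam)
       \<and> (\<forall>lam > 0. H_tau tau m K lam = 0 \<longleftrightarrow> (m = 0 \<and> K = 0))
       \<and> (\<forall>lam1 lam2. lam1 \<le> lam2 \<longrightarrow> H_tau tau m K lam2 \<le> H_tau tau m K lam1)"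
proof -
  obtain P kappa where oP: "orthogonal_matrix P" and KP: "K = P ** diag_mat kappa ** transpose P"
    using spectral[OF assms(3)] by blast
  have kpos: "\<And>i. 0 \<le> kappa i" and kb: "\<And>i. kappa i \<le> spec_norm K"
    using kappa_props[OF oP KP assms(4)] by auto
  let ?y = "transpose P *v m"
  let ?F = "\<lambda>lam. 0 < lam \<and> (1 - tau) * spec_norm K < lam"
  let ?S = "\<lambda>lam. (\<Sum>i\<in>UNIV. qterm tau lam (kappa i) (?y $ i) + hfun tau lam (kappa i))"
  have inf: "\<not> ?F lam \<Longrightarrow> H_tau tau m K lam = \<infinity>" for lam
    unfolding H_tau_def by (auto simp: mult.commute)
  have fml: "?F lam \<Longrightarrow> H_tau tau m K lam = ereal (?S lam)" for lam
    using main_formula[OF oP KP kpos kb assms(1,2)] by blast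
  have feas: "?F lam \<Longrightarrow> (1 - tau) * kappa i < lam" for lam i
    using mult_left_mono[OF kb[of i], of "1 - tau"] assms(2) by linarith
  have termnn: "?F lam \<Longrightarrow> 0 \<le> qterm tau lam (kappa i) (?y $ i) + hfun tau lam (kappa i)" for lam i
    using qterm_props(1)[OF assms(1,2) kpos, of lam i] hfun_props(1)[OF assms(1,2) kpos, of lam i] feas[of lam i]
    by auto
  have part1: "0 \<le> H_tau tau m K lam" for lam
  proof (cases "?F lam")
    case True
    then show ?thesis using fml[OF True] termnn[OF True] by (simp add: sum_nonneg)
  qed (simp add: inf)
  have part2: "H_tau tau m K lam = 0 \<longleftrightarrow> (m = 0 \<and> K = 0)" if lp: "lam > 0" for lam
  proof
    assume H0: "H_tau tau m K lam = 0"
    hence F: "?F lam" using inf by fastforce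
    hence "?S lam = 0" using fml H0 by simp
    hence z: "qterm tau lam (kappa i) (?y $ i) + hfun tau lam (kappa i) = 0" for i
    proof -
      have "\<forall>j\<in>UNIV. qterm tau lam (kappa j) (?y $ j) + hfun tau lam (kappa j) = 0"
        using sum_nonneg_eq_0_iff[of UNIV "\<lambda>j. qterm tau lam (kappa j) (?y $ j) + hfun tau lam (kappa j)"]
          termnn[OF F] \<open>?S lam = 0\<close> by simp
      thus ?thesis by blast
    qed
    have q0: "qterm tau lam (kappa i) (?y $ i) = 0" and h0: "hfun tau lam (kappa i) = 0" for i
    proof -
      have "0 \<le> qterm tau lam (kappa i) (?y $ i)"
        by (rule qterm_props(1)[OF assms(1,2) kpos[of i] lp feas[OF F, of i]])
      moreover have "0 \<le> hfun tau lam (kappa i)"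
        by (rule hfun_props(1)[OF assms(1,2) kpos[of i] lp feas[OF F, of i]])
      ultimately show "qterm tau lam (kappa i) (?y $ i) = 0" "hfun tau lam (kappa i) = 0"
        using z[of i] by auto
    qed
    have y0: "?y = 0" using q0 qterm_props(2)[OF assms(1,2) kpos lp feas[OF F]] by (simp add: vec_eq_iff)
    have k0: "kappa i = 0" for i using h0[of i] hfun_props(2)[OF assms(1,2) kpos[of i] lp feas[OF F, of i]] by simp
    have "m = P *v ?y" using oP
      by (simp add: matrix_vector_mul_assoc orthogonal_matrix_def del: transpose_matrix_vector)
    hence "m = 0" using y0 by simp
    moreover have "K = 0"
    proof -
      have "kappa = (\<lambda>i. 0 * kappa i)" using k0 by auto
      hence "K = 0 *\<^sub>R K" using KP mat1_conj(2)[OF oP, of 0 kappa] by metis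
      thus ?thesis by simp
    qed
    ultimately show "m = 0 \<and> K = 0" by simp
  next
    assume mK: "m = 0 \<and> K = 0"
    have sn: "spec_norm K = 0" using mK by (simp add: spec_norm_def onorm_zero)
    hence F: "?F lam" using lp by simp
    have k0: "kappa i = 0" for i using kpos[of i] kb[of i] sn by simp
    have hz: "hfun tau lam 0 = 0" using hfun_props(2)[OF assms(1,2) order_refl lp] lp by simp
    show "H_tau tau m K lam = 0" using fml[OF F] mK k0 hz by (simp add: qterm_def)
  qed
  have part3: "H_tau tau m K l2 \<le> H_tau tau m K l1" if "l1 \<le> l2" for l1 l2
  proof (cases "?F l1")
    case True
    have F2: "?F l2" using True that by auto
    have "?S l2 \<le> ?S l1"
    proof (rule sum_mono)
      fix i
      show "qterm tau l2 (kappa i) (?y $ i) + hfun tau l2 (kappa i)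
          \<le> qterm tau l1 (kappa i) (?y $ i) + hfun tau l1 (kappa i)"
        using qterm_mono[OF assms(1,2) kpos[of i] _ feas[OF True, of i] that, of "?y $ i"]
          hfun_mono[OF assms(1,2) kpos[of i] _ feas[OF True, of i] that] True by auto
    qed
    then show ?thesis using fml[OF True] fml[OF F2] by simp
  qed (simp add: inf)
  show ?thesis using part1 part2 part3 by blast
qed

end
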